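(* Let $X$ be a real random variable with $X\ge 1.5$ almost surely. Assume $X$ has finite variance and is not almost surely constant. Let $\tau\in(0,1]$ and $c\in\mathbb R$ be constants. Then $$\operatorname{Var}\Big(\sqrt{\big(X+\tfrac{\tau}{1+e^{X}}\big)^2+c^2}\Big)<\operatorname{Var}\Big(\sqrt{X^2+c^2}\Big).$$ *)

theory Defs
  imports "HOL-Probability.Probability"
begin

end

theory Submission
  imports Defs
begin

lemma aux_h1: fixes x t s :: real assumes "s > 0"
  shows "(x + t/(1+s)) * (1 - t * s/(1+s)^2) = x + t/(1+s) * (1 - s * (x + t/(1+s))/(1+s))"
proof -
  have "1 + s \<noteq> 0" using assms by linarith
  then show ?thesis by (simp add: field_simps power2_eq_square)
qed
lemma aux_h2: fixes a b p q :: real assumes "b > 0" "q > 0" "a * q < p * b"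
  shows "a / b < p / q"
  using assms by (simp add: divide_less_eq less_divide_eq mult.commute)


lemma key_ineq:
  fixes x \<tau> c :: real
  assumes x: "x \<ge> 1.5" and t: "0 < \<tau>" "\<tau> \<le> 1"
  defines "u \<equiv> x + \<tau> / (1 + exp x)"
  defines "u' \<equiv> 1 - \<tau> * exp x / (1 + exp x)^2"
  shows "0 < u'" "u' < 1" "u * u' \<le> x" "0 < u" "u * u' / sqrt (u^2 + c^2) < x / sqrt (x^2 + c^2)"
proof -
  define s where "s = exp x"
  have s0: "s > 0" unfolding s_def by simp
  have s2: "s \<ge> 2.5" unfolding s_def using exp_ge_add_one_self[of x] x by linarith
  have e: "(1 + s)^2 - 4 * s = (s - 1)^2" by (simp add: power2_eq_square algebra_simps)
  have "4 * s \<le> (1+s)^2" using e zero_le_power2[of "s - 1"] by linarith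
  then have q: "s / (1+s)^2 \<le> 1/4" using s0 by (simp add: field_simps)
  have "\<tau> * (s / (1+s)^2) \<le> 1 * (s / (1+s)^2)" using t s0 by (intro mult_right_mono) auto
  moreover have "\<tau> * s / (1+s)^2 = \<tau> * (s / (1+s)^2)" by simp
  ultimately have "\<tau> * s / (1+s)^2 \<le> 1/4" using q by linarith
  then show u'0: "0 < u'" unfolding u'_def s_def[symmetric] by linarith
  have "\<tau> * s / (1+s)^2 > 0" using t s0 by simp
  then show u'1: "u' < 1" unfolding u'_def s_def[symmetric] by linarith
  have d0: "\<tau> / (1 + s) > 0" using t s0 by simp
  then show u0: "0 < u" unfolding u_def s_def[symmetric] using x by linarith
  have "(x + \<tau>/(1+s)) * (1 - \<tau> * s/(1+s)^2) \<le> x"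
  proof -
    have "(x + \<tau>/(1+s)) * (1 - \<tau> * s/(1+s)^2) = x + \<tau>/(1+s) * (1 - s * (x + \<tau>/(1+s))/(1+s))"
      by (rule aux_h1[OF s0])
    moreover have "s * (x + \<tau>/(1+s))/(1+s) \<ge> 1"
    proof -
      have "s * x \<ge> s * 1.5" using s0 x by (intro mult_left_mono) auto
      then have "s * x \<ge> 1 + s" using s2 by linarith
      moreover have "s * (\<tau>/(1+s)) > 0" by (rule mult_pos_pos[OF s0 d0])
      ultimately have "s * (x + \<tau>/(1+s)) \<ge> 1 + s" by (simp add: distrib_left)
      moreover have sp: "0 < 1 + s" using s0 by linarith
      ultimately show ?thesis by (simp only: pos_le_divide_eq[OF sp] mult_1_left)
    qed
    moreover have "\<tau>/(1+s) * (1 - s * (x + \<tau>/(1+s))/(1+s)) \<le> 0"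
      using d0 calculation(2) by (intro mult_nonneg_nonpos) auto
    ultimately show ?thesis by linarith
  qed
  then show uu: "u * u' \<le> x" unfolding u_def u'_def s_def[symmetric] .
  show "u * u' / sqrt (u^2 + c^2) < x / sqrt (x^2 + c^2)"
  proof -
    have p1: "sqrt (u^2+c^2) > 0" "sqrt (x^2+c^2) > 0" using u0 x by (auto intro: add_pos_nonneg)
    have "(u*u')^2 * (x^2+c^2) < x^2 * (u^2+c^2)"
    proof -
      have a: "(u*u')^2 * x^2 < x^2 * u^2"
      proof -
        have "u'^2 < 1" using u'0 u'1 by (simp add: power_less_one_iff abs_less_iff)
        then have "u^2 * u'^2 < u^2" using u0 by simp
        then show ?thesis using x by (simp add: power_mult_distrib mult.commute)
      qed
      have b: "(u*u')^2 * c^2 \<le> x^2 * c^2"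
        using uu u0 u'0 x by (intro mult_right_mono power_mono) auto
      show ?thesis using a b by (simp add: algebra_simps)
    qed
    then have "(u*u')^2 / (u^2+c^2) < x^2 / (x^2+c^2)"
      using u0 x by (intro aux_h2) (auto intro: add_pos_nonneg)
    moreover have nu: "0 \<le> u^2+c^2" "0 \<le> x^2+c^2" by simp_all
    ultimately have "(u*u' / sqrt (u^2+c^2))^2 < (x / sqrt (x^2+c^2))^2"
      by (simp only: power_divide real_sqrt_pow2[OF nu(1)] real_sqrt_pow2[OF nu(2)])
    moreover have "0 \<le> x / sqrt (x^2+c^2)"
      using x p1(2) by (intro divide_nonneg_nonneg) simp_all
    ultimately show ?thesis by (rule power2_less_imp_less)
  qed
qed


lemma deriv_u:
  fixes x \<tau> :: real
  shows "((\<lambda>x. x + \<tau> / (1 + exp x)) has_real_derivative (1 - \<tau> * exp x / (1 + exp x)^2)) (at x)"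
proof -
  have ne: "1 + exp x \<noteq> 0" using exp_gt_zero[of x] by linarith
  have "((\<lambda>x. x + \<tau> / (1 + exp x)) has_real_derivative
      (1 + (0 * (1 + exp x) - \<tau> * (0 + exp x)) / ((1 + exp x) * (1 + exp x)))) (at x)"
    by (intro DERIV_add DERIV_ident DERIV_divide DERIV_const DERIV_exp ne)
  moreover have "1 + (0 * (1 + exp x) - \<tau> * (0 + exp x)) / ((1 + exp x) * (1 + exp x)) = 1 - \<tau> * exp x / (1 + exp x)^2"
    by (simp add: power2_eq_square)
  ultimately show ?thesis by (simp only:)
qed

lemma deriv_sq:
  fixes v :: "real \<Rightarrow> real" and c x v' :: real
  assumes d: "(v has_real_derivative v') (at x)" and p: "0 < v x"
  shows "((\<lambda>x. sqrt ((v x)^2 + c^2)) has_real_derivative (v x * v' / sqrt ((v x)^2 + c^2))) (at x)"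
proof -
  have q: "0 < (v x)^2 + c^2" using p by (intro add_pos_nonneg) auto
  have d2: "((\<lambda>x. (v x)^2 + c^2) has_real_derivative (2 * v x * v')) (at x)"
    using DERIV_add[OF DERIV_power[OF d, of 2] DERIV_const[of "c^2"]] by (simp add: mult_ac)
  have "((\<lambda>x. sqrt ((v x)^2 + c^2)) has_real_derivative (inverse (sqrt ((v x)^2 + c^2)) / 2 * (2 * v x * v'))) (at x)"
    using DERIV_chain2[OF DERIV_real_sqrt[OF q] d2] by simp
  moreover have "inverse (sqrt ((v x)^2 + c^2)) / 2 * (2 * v x * v') = v x * v' / sqrt ((v x)^2 + c^2)"
    by (simp add: field_simps)
  ultimately show ?thesis by simp
qed

lemma deriv_g:
  fixes x \<tau> c :: real
  assumes "0 < x + \<tau> / (1 + exp x)"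
  shows "((\<lambda>x. sqrt ((x + \<tau> / (1 + exp x))^2 + c^2)) has_real_derivative
     ((x + \<tau> / (1 + exp x)) * (1 - \<tau> * exp x / (1 + exp x)^2) / sqrt ((x + \<tau> / (1 + exp x))^2 + c^2))) (at x)"
  using deriv_sq[of "\<lambda>x. x + \<tau> / (1 + exp x)", OF deriv_u] assms by simp

lemma deriv_f:
  fixes x c :: real
  assumes "0 < x"
  shows "((\<lambda>x. sqrt (x^2 + c^2)) has_real_derivative (x / sqrt (x^2 + c^2))) (at x)"
  using deriv_sq[of "\<lambda>x. x", OF DERIV_ident] assms by simp

lemma mono_fg:
  fixes a b \<tau> c :: real
  assumes a: "1.5 \<le> a" "a < b" and t: "0 < \<tau>" "\<tau> \<le> 1"
  shows "sqrt ((a + \<tau> / (1 + exp a))^2 + c^2) < sqrt ((b + \<tau> / (1 + exp b))^2 + c^2)"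
    "sqrt ((b + \<tau> / (1 + exp b))^2 + c^2) - sqrt ((a + \<tau> / (1 + exp a))^2 + c^2)
      < sqrt (b^2 + c^2) - sqrt (a^2 + c^2)"
proof -
  let ?g = "\<lambda>x. sqrt ((x + \<tau> / (1 + exp x))^2 + c^2)"
  let ?f = "\<lambda>x::real. sqrt (x^2 + c^2)"
  show "?g a < ?g b"
  proof (rule DERIV_pos_imp_increasing[OF a(2)])
    fix x assume "a \<le> x" "x \<le> b"
    then have x: "x \<ge> 1.5" using a by simp
    note k = key_ineq(1-4)[OF x t] key_ineq(5)[OF x t, of c]
    show "\<exists>y. (?g has_real_derivative y) (at x) \<and> 0 < y"
    proof (intro exI conjI)
      show "(?g has_real_derivative ((x + \<tau> / (1 + exp x)) * (1 - \<tau> * exp x / (1 + exp x)^2) / sqrt ((x + \<tau> / (1 + exp x))^2 + c^2))) (at x)"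
        by (rule deriv_g[OF k(4)])
      have "0 < sqrt ((x + \<tau> / (1 + exp x))^2 + c^2)" using k(4) by (intro real_sqrt_gt_zero add_pos_nonneg) auto
      then show "0 < (x + \<tau> / (1 + exp x)) * (1 - \<tau> * exp x / (1 + exp x)^2) / sqrt ((x + \<tau> / (1 + exp x))^2 + c^2)"
        using k(1,4) by (intro divide_pos_pos mult_pos_pos) auto
    qed
  qed
  have "(\<lambda>x. ?f x - ?g x) a < (\<lambda>x. ?f x - ?g x) b"
  proof (rule DERIV_pos_imp_increasing[OF a(2)])
    fix x assume "a \<le> x" "x \<le> b"
    then have x: "x \<ge> 1.5" using a by simp
    note k = key_ineq(1-4)[OF x t] key_ineq(5)[OF x t, of c]
    show "\<exists>y. ((\<lambda>x. ?f x - ?g x) has_real_derivative y) (at x) \<and> 0 < y"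
    proof -
      have x0: "0 < x" using x by simp
      have d: "((\<lambda>x. ?f x - ?g x) has_real_derivative (x / sqrt (x^2 + c^2) - (x + \<tau> / (1 + exp x)) * (1 - \<tau> * exp x / (1 + exp x)^2) / sqrt ((x + \<tau> / (1 + exp x))^2 + c^2))) (at x)"
        by (rule DERIV_diff[OF deriv_f[OF x0] deriv_g[OF k(4)]])
      have "0 < x / sqrt (x^2 + c^2) - (x + \<tau> / (1 + exp x)) * (1 - \<tau> * exp x / (1 + exp x)^2) / sqrt ((x + \<tau> / (1 + exp x))^2 + c^2)"
        using k(5) by linarith
      then show ?thesis using d by blast
    qed
  qed
  then show "?g b - ?g a < ?f b - ?f a" by simp
qed

lemma contract:
  fixes a b \<tau> c :: real
  assumes a: "1.5 \<le> a" "1.5 \<le> b" "a \<noteq> b" and t: "0 < \<tau>" "\<tau> \<le> 1"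
  shows "(sqrt ((a + \<tau> / (1 + exp a))^2 + c^2) - sqrt ((b + \<tau> / (1 + exp b))^2 + c^2))^2
      < (sqrt (a^2 + c^2) - sqrt (b^2 + c^2))^2"
proof (cases "a < b")
  case True
  note m = mono_fg[OF a(1) True t, of c]
  have "(sqrt ((b + \<tau> / (1 + exp b))^2 + c^2) - sqrt ((a + \<tau> / (1 + exp a))^2 + c^2))^2
      < (sqrt (b^2 + c^2) - sqrt (a^2 + c^2))^2"
    using m by (intro power_strict_mono) auto
  then show ?thesis by (simp add: power2_commute)
next
  case False
  then have "b < a" using a by simp
  note m = mono_fg[OF a(2) this t, of c]
  show ?thesis using m by (intro power_strict_mono) auto
qed


lemma (in prob_space) var_le_shift:
  fixes Z :: "'a \<Rightarrow> real"
  assumes i1: "integrable M Z" and i2: "integrable M (\<lambda>x. (Z x)\<^sup>2)"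
  shows "variance Z \<le> expectation (\<lambda>x. (Z x - k)\<^sup>2)"
proof -
  have e: "(\<lambda>x. (Z x - k)\<^sup>2) = (\<lambda>x. (Z x)\<^sup>2 - 2 * k * Z x + k\<^sup>2)"
    by (intro ext) (simp add: power2_eq_square algebra_simps)
  have ex: "expectation (\<lambda>x. (Z x - k)\<^sup>2) = expectation (\<lambda>x. (Z x)\<^sup>2) - 2 * k * expectation Z + k\<^sup>2"
    unfolding e using i1 i2 by (simp add: prob_space)
  have v: "variance Z = expectation (\<lambda>x. (Z x)\<^sup>2) - (expectation Z)\<^sup>2"
    using variance_eq[OF i1 i2] .
  have sq: "(expectation Z - k)\<^sup>2 = (expectation Z)\<^sup>2 - 2 * k * expectation Z + k\<^sup>2"
    by (simp add: power2_eq_square algebra_simps)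
  show ?thesis unfolding ex v using sq zero_le_power2[of "expectation Z - k"] by linarith
qed

lemma (in prob_space) sq_int_imp_int:
  fixes Z :: "'a \<Rightarrow> real"
  assumes m: "Z \<in> borel_measurable M" and i2: "integrable M (\<lambda>x. (Z x)\<^sup>2)"
  shows "integrable M Z"
proof (rule Bochner_Integration.integrable_bound[where f="\<lambda>x. 1 + (Z x)\<^sup>2"])
  show "integrable M (\<lambda>x. 1 + (Z x)\<^sup>2)" using i2 by simp
  show "Z \<in> borel_measurable M" by (rule m)
  show "AE x in M. norm (Z x) \<le> norm (1 + (Z x)\<^sup>2)"
  proof (rule AE_I2)
    fix x
    have "\<bar>Z x\<bar> \<le> 1 + (Z x)\<^sup>2"
    proof (cases "\<bar>Z x\<bar> \<le> 1")
      case True then show ?thesis using zero_le_power2[of "Z x"] by linarith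
    next
      case False
      then have "\<bar>Z x\<bar> * 1 \<le> \<bar>Z x\<bar> * \<bar>Z x\<bar>" by (intro mult_left_mono) auto
      then show ?thesis by (simp add: power2_eq_square abs_mult_self_eq)
    qed
    then show "norm (Z x) \<le> norm (1 + (Z x)\<^sup>2)" by simp
  qed
qed


theorem lemma4:
  fixes M :: "'a measure" and X :: "'a \<Rightarrow> real" and \<tau> c :: real
  assumes "prob_space M"
    and "X \<in> borel_measurable M"
    and "AE \<omega> in M. X \<omega> \<ge> 1.5"
    and "integrable M (\<lambda>\<omega>. (X \<omega>)\<^sup>2)"
    and "\<not> (\<exists>a. AE \<omega> in M. X \<omega> = a)"
    and "0 < \<tau>" and "\<tau> \<le> 1"
  shows "prob_space.variance M (\<lambda>\<omega>. sqrt ((X \<omega> + \<tau> / (1 + exp (X \<omega>)))\<^sup>2 + c\<^sup>2))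
         < prob_space.variance M (\<lambda>\<omega>. sqrt ((X \<omega>)\<^sup>2 + c\<^sup>2))"
proof -
  interpret prob_space M by (rule assms(1))
  note Xm[measurable] = assms(2)
  note t = assms(6,7)
  define f where "f = (\<lambda>x::real. sqrt (x\<^sup>2 + c\<^sup>2))"
  define g where "g = (\<lambda>x::real. sqrt ((x + \<tau> / (1 + exp x))\<^sup>2 + c\<^sup>2))"
  have Ym[measurable]: "(\<lambda>\<omega>. f (X \<omega>)) \<in> borel_measurable M" unfolding f_def by measurable
  have Zm[measurable]: "(\<lambda>\<omega>. g (X \<omega>)) \<in> borel_measurable M" unfolding g_def by measurable
  have fsq: "(f x)\<^sup>2 = x\<^sup>2 + c\<^sup>2" for x unfolding f_def by simp
  have gsq: "(g x)\<^sup>2 = (x + \<tau> / (1 + exp x))\<^sup>2 + c\<^sup>2" for x unfolding g_def by simp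
  have iY2: "integrable M (\<lambda>\<omega>. (f (X \<omega>))\<^sup>2)" unfolding fsq using assms(4) by simp
  have iZ2: "integrable M (\<lambda>\<omega>. (g (X \<omega>))\<^sup>2)"
  proof (rule Bochner_Integration.integrable_bound[where f="\<lambda>\<omega>. 2 * (X \<omega>)\<^sup>2 + 2 + c\<^sup>2"])
    show "integrable M (\<lambda>\<omega>. 2 * (X \<omega>)\<^sup>2 + 2 + c\<^sup>2)" using assms(4) by simp
    show "(\<lambda>\<omega>. (g (X \<omega>))\<^sup>2) \<in> borel_measurable M" by measurable
    show "AE \<omega> in M. norm ((g (X \<omega>))\<^sup>2) \<le> norm (2 * (X \<omega>)\<^sup>2 + 2 + c\<^sup>2)"
    proof (rule AE_I2)
      fix \<omega>
      obtain x where x_def: "x = X \<omega>" by simp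
      obtain d where d_def: "d = \<tau> / (1 + exp x)" by simp
      have e2: "0 < exp x" by simp
      have e1: "0 < 1 + exp x" using e2 by linarith
      have e3: "1 \<le> 1 + exp x" using e2 by linarith
      have d0: "0 \<le> d" unfolding d_def using t e1 by simp
      have e4: "\<tau> \<le> 1 + exp x" using t e3 by linarith
      have d1: "d \<le> 1" unfolding d_def using pos_divide_le_eq[OF e1, of \<tau> 1] e4 by simp
      have "(x + d)\<^sup>2 \<le> 2 * x\<^sup>2 + 2 * d\<^sup>2"
        using zero_le_power2[of "x - d"] by (simp add: power2_eq_square algebra_simps)
      moreover have "d\<^sup>2 \<le> 1" using d0 d1 by (simp add: power_le_one)
      ultimately have "(x + d)\<^sup>2 + c\<^sup>2 \<le> 2 * x\<^sup>2 + 2 + c\<^sup>2" by linarith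
      then show "norm ((g (X \<omega>))\<^sup>2) \<le> norm (2 * (X \<omega>)\<^sup>2 + 2 + c\<^sup>2)"
        unfolding gsq x_def[symmetric] d_def[symmetric] by simp
    qed
  qed
  have iY: "integrable M (\<lambda>\<omega>. f (X \<omega>))" by (rule sq_int_imp_int[OF Ym iY2])
  have iZ: "integrable M (\<lambda>\<omega>. g (X \<omega>))" by (rule sq_int_imp_int[OF Zm iZ2])
  define m where "m = expectation (\<lambda>\<omega>. f (X \<omega>))"
  have fge: "f x \<ge> f 1.5" if "x \<ge> 1.5" for x
    unfolding f_def using that by (intro real_sqrt_le_mono add_right_mono power_mono) auto
  have "AE \<omega> in M. f 1.5 \<le> f (X \<omega>)" using assms(3) by eventually_elim (rule fge)
  then have "f 1.5 \<le> m" unfolding m_def by (rule integral_ge_const[OF iY])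
  then have m2: "(1.5::real)\<^sup>2 + c\<^sup>2 \<le> m\<^sup>2" and m0: "0 \<le> m"
  proof -
    have p: "0 \<le> f 1.5" unfolding f_def by simp
    show "0 \<le> m" using p \<open>f 1.5 \<le> m\<close> by linarith
    have "(f 1.5)\<^sup>2 \<le> m\<^sup>2" using p \<open>f 1.5 \<le> m\<close> by (intro power_mono) auto
    then show "(1.5::real)\<^sup>2 + c\<^sup>2 \<le> m\<^sup>2" unfolding fsq .
  qed
  define y0 where "y0 = sqrt (m\<^sup>2 - c\<^sup>2)"
  have y0: "1.5 \<le> y0"
  proof -
    have "sqrt ((1.5::real)\<^sup>2) \<le> y0" unfolding y0_def using m2 by (intro real_sqrt_le_mono) linarith
    then show ?thesis by simp
  qed
  have fy0: "f y0 = m"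
  proof -
    have "0 \<le> m\<^sup>2 - c\<^sup>2" using m2 by (smt (verit) zero_le_power2)
    then have "(f y0)\<^sup>2 = m\<^sup>2" unfolding fsq y0_def by simp
    moreover have "0 \<le> f y0" unfolding f_def by simp
    ultimately show ?thesis using m0 by (metis power2_eq_iff_nonneg)
  qed
  define k where "k = g y0"
  have "variance (\<lambda>\<omega>. g (X \<omega>)) \<le> expectation (\<lambda>\<omega>. (g (X \<omega>) - k)\<^sup>2)"
    by (rule var_le_shift[OF iZ iZ2])
  also have "\<dots> < expectation (\<lambda>\<omega>. (f (X \<omega>) - m)\<^sup>2)"
  proof -
    define D where "D = (\<lambda>\<omega>. (f (X \<omega>) - m)\<^sup>2 - (g (X \<omega>) - k)\<^sup>2)"
    have iA: "integrable M (\<lambda>\<omega>. (f (X \<omega>) - m)\<^sup>2)"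
      using iY iY2 by (simp add: power2_diff)
    have iB: "integrable M (\<lambda>\<omega>. (g (X \<omega>) - k)\<^sup>2)"
      using iZ iZ2 by (simp add: power2_diff)
    have iD: "integrable M D" unfolding D_def using iA iB by simp
    have Dpos: "0 < D \<omega>" if "X \<omega> \<ge> 1.5" "X \<omega> \<noteq> y0" for \<omega>
      using contract[OF that(1) y0 that(2) t, of c] unfolding D_def f_def g_def k_def fy0[symmetric]
      by simp
    have Dnn: "AE \<omega> in M. 0 \<le> D \<omega>"
      using assms(3)
    proof (rule AE_mp, intro AE_I2 impI)
      fix \<omega> assume "X \<omega> \<ge> 1.5"
      then show "0 \<le> D \<omega>"
        using Dpos[of \<omega>] by (cases "X \<omega> = y0") (auto simp: D_def k_def fy0[symmetric])
    qed
    have "integral\<^sup>L M D \<noteq> 0"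
    proof
      assume "integral\<^sup>L M D = 0"
      then have "AE \<omega> in M. D \<omega> = 0" using integral_nonneg_eq_0_iff_AE[OF iD Dnn] by simp
      then have "AE \<omega> in M. X \<omega> = y0"
        using assms(3) by eventually_elim (use Dpos in force)
      then show False using assms(5) by blast
    qed
    moreover have "0 \<le> integral\<^sup>L M D" by (rule integral_nonneg_AE[OF Dnn])
    ultimately have "0 < integral\<^sup>L M D" by simp
    moreover have "integral\<^sup>L M D = expectation (\<lambda>\<omega>. (f (X \<omega>) - m)\<^sup>2) - expectation (\<lambda>\<omega>. (g (X \<omega>) - k)\<^sup>2)"
      unfolding D_def using iA iB by simp
    ultimately show ?thesis by simp
  qed
  finally show ?thesis unfolding m_def f_def g_def .
qed

end
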